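(* Let $(X,\tau)$ be a principal topological space, i.e. arbitrary intersections of open sets are open. The following are equivalent: (i) $(X,\tau)$ is pre-Hausdorff; (ii) $(X,\tau)$ is regular; (iii) $(X,\tau)$ has dimension $0$, i.e. has a basis consisting of clopen sets; (iv) the operator $\neg:\tau\to\tau$ defined by $\neg U = \operatorname{int}(X\setminus U)$ satisfies $\neg\neg U = U$ for every $U\in\tau$ (equivalently, the topos of sheaves on $X$ is Boolean).
   Context: A space is pre-Hausdorff ($T_{0,2}$) if any two points $a,b$ for which some open set contains exactly one of them (a $T_0$-separation) also have disjoint open neighbourhoods. "Regular" means: for every closed set $A$ and point $p\notin A$ there are disjoint open sets $U\ni p$ and $V\supseteq A$; points are not required to be closed. *)

theory Defs
  imports "HOL-Analysis.Analysis"
begin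

text \<open>Principal (Alexandrov) space: arbitrary intersections of open sets are open
 (intersections are taken inside the carrier; the empty family gives the whole space).\<close>
definition principal_space :: "'a topology \<Rightarrow> bool" where
  "principal_space X \<longleftrightarrow>
     (\<forall>\<F>. (\<forall>U\<in>\<F>. openin X U) \<longrightarrow> openin X (topspace X \<inter> \<Inter>\<F>))"

definition pre_Hausdorff_space :: "'a topology \<Rightarrow> bool" where
  "pre_Hausdorff_space X \<longleftrightarrow>
     (\<forall>a\<in>topspace X. \<forall>b\<in>topspace X.
        (\<exists>W. openin X W \<and> (a \<in> W \<longleftrightarrow> b \<notin> W)) \<longrightarrow>
        (\<exists>U V. openin X U \<and> openin X V \<and> a \<in> U \<and> b \<in> V \<and> disjnt U V))"

definition clopen_basis :: "'a topology \<Rightarrow> bool" where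
  "clopen_basis X \<longleftrightarrow>
     (\<exists>\<B>. (\<forall>B\<in>\<B>. openin X B \<and> closedin X B) \<and>
          (\<forall>U. openin X U \<longrightarrow> (\<exists>\<U>. \<U> \<subseteq> \<B> \<and> U = \<Union>\<U>)))"

definition open_neg :: "'a topology \<Rightarrow> 'a set \<Rightarrow> 'a set" where
  "open_neg X U = X interior_of (topspace X - U)"

end

theory Submission
  imports Defs
begin

definition nb :: "'a topology \<Rightarrow> 'a \<Rightarrow> 'a set" where
  "nb X y = topspace X \<inter> \<Inter>{U. openin X U \<and> y \<in> U}"

lemma nb_open: "principal_space X \<Longrightarrow> openin X (nb X y)"
  unfolding nb_def principal_space_def by auto

lemma nb_mem: "y \<in> topspace X \<Longrightarrow> y \<in> nb X y"
  unfolding nb_def by auto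

lemma nb_sub: "openin X U \<Longrightarrow> y \<in> U \<Longrightarrow> nb X y \<subseteq> U"
  unfolding nb_def by auto

lemma nb_top: "nb X y \<subseteq> topspace X"
  unfolding nb_def by auto

lemma nb_trans: "principal_space X \<Longrightarrow> q \<in> nb X p \<Longrightarrow> nb X q \<subseteq> nb X p"
  by (simp add: nb_open nb_sub)

definition symm :: "'a topology \<Rightarrow> bool" where
  "symm X \<longleftrightarrow> (\<forall>y\<in>topspace X. \<forall>z. z \<in> nb X y \<longrightarrow> y \<in> nb X z)"

lemma symm_closed:
  assumes P: "principal_space X" and S: "symm X" and U: "openin X U"
  shows "closedin X U"
proof -
  have "openin X (topspace X - U)"
  proof (subst openin_subopen, intro ballI)
    fix y assume y: "y \<in> topspace X - U"
    have "nb X y \<subseteq> topspace X - U"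
    proof
      fix z assume z: "z \<in> nb X y"
      show "z \<in> topspace X - U"
      proof (rule ccontr)
        assume "z \<notin> topspace X - U"
        with subsetD[OF nb_top z] have "z \<in> U" by blast
        moreover have "y \<in> nb X z" using S y z unfolding symm_def by blast
        ultimately show False using nb_sub[OF U] y by blast
      qed
    qed
    then show "\<exists>T. openin X T \<and> y \<in> T \<and> T \<subseteq> topspace X - U"
      using nb_open[OF P, of y] nb_mem[of y X] y by blast
  qed
  then show ?thesis using U openin_subset by (simp add: closedin_def)
qed

lemma preH_symm:
  assumes P: "principal_space X" and H: "pre_Hausdorff_space X"
  shows "symm X"
  unfolding symm_def
proof (intro ballI allI impI)
  fix y z assume y: "y \<in> topspace X" and z: "z \<in> nb X y"
  show "y \<in> nb X z"
  proof (rule ccontr)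
    assume ny: "y \<notin> nb X z"
    have zt: "z \<in> topspace X" using subsetD[OF nb_top z] .
    have "\<exists>W. openin X W \<and> (z \<in> W \<longleftrightarrow> y \<notin> W)"
      using nb_open[OF P, of z] nb_mem[OF zt] ny by blast
    then obtain U V where "openin X U" "openin X V" "z \<in> U" "y \<in> V" "disjnt U V"
      using H y zt unfolding pre_Hausdorff_space_def by blast
    moreover have "z \<in> V" using nb_sub[OF \<open>openin X V\<close> \<open>y \<in> V\<close>] z by blast
    ultimately show False by (auto simp: disjnt_def)
  qed
qed

lemma symm_preH:
  assumes P: "principal_space X" and S: "symm X"
  shows "pre_Hausdorff_space X"
  unfolding pre_Hausdorff_space_def
proof (intro ballI impI)
  fix a b assume a: "a \<in> topspace X" and b: "b \<in> topspace X"
    and "\<exists>W. openin X W \<and> (a \<in> W \<longleftrightarrow> b \<notin> W)"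
  then obtain W where W: "openin X W" "a \<in> W \<longleftrightarrow> b \<notin> W" by blast
  have "disjnt (nb X a) (nb X b)"
  proof (rule ccontr)
    assume "\<not> disjnt (nb X a) (nb X b)"
    then obtain p where p: "p \<in> nb X a" "p \<in> nb X b" by (auto simp: disjnt_def)
    have "a \<in> nb X p" "b \<in> nb X p" using S a b p unfolding symm_def by blast+
    then have "nb X a \<subseteq> nb X b" "nb X b \<subseteq> nb X a"
      using nb_trans[OF P \<open>a \<in> nb X p\<close>] nb_trans[OF P \<open>b \<in> nb X p\<close>]
        nb_trans[OF P p(1)] nb_trans[OF P p(2)] by blast+
    then show False using W nb_sub[OF W(1), of a] nb_sub[OF W(1), of b] nb_mem[OF a] nb_mem[OF b] by blast
  qed
  then show "\<exists>U V. openin X U \<and> openin X V \<and> a \<in> U \<and> b \<in> V \<and> disjnt U V"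
    using nb_open[OF P, of a] nb_open[OF P, of b] nb_mem[OF a] nb_mem[OF b] by blast
qed

lemma reg_symm:
  assumes P: "principal_space X" and R: "regular_space X"
  shows "symm X"
  unfolding symm_def
proof (intro ballI allI impI)
  fix y z assume y: "y \<in> topspace X" and z: "z \<in> nb X y"
  have zt: "z \<in> topspace X" using subsetD[OF nb_top z] .
  show "y \<in> nb X z"
  proof (rule ccontr)
    assume ny: "y \<notin> nb X z"
    define O' where "O' = {p \<in> topspace X. y \<notin> nb X p}"
    have "openin X O'"
    proof (subst openin_subopen, intro ballI)
      fix p assume p: "p \<in> O'"
      have "nb X p \<subseteq> O'"
      proof
        fix q assume q: "q \<in> nb X p"
        have "nb X q \<subseteq> nb X p" using nb_trans[OF P q] .
        then show "q \<in> O'" using p subsetD[OF nb_top q] unfolding O'_def by blast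
      qed
      then show "\<exists>T. openin X T \<and> p \<in> T \<and> T \<subseteq> O'"
        using nb_open[OF P, of p] nb_mem[of p X] p unfolding O'_def by blast
    qed
    then have C: "closedin X (topspace X - O')" by (simp add: closedin_diff)
    have zz: "z \<in> topspace X - (topspace X - O')" using zt ny by (simp add: O'_def)
    have "\<exists>U V. openin X U \<and> openin X V \<and> z \<in> U \<and> topspace X - O' \<subseteq> V \<and> disjnt U V"
      using R C zz unfolding regular_space_def by (elim allE[of _ "topspace X - O'"] allE[of _ z]) simp
    then obtain U V where "openin X U" "openin X V" "z \<in> U"
      "topspace X - O' \<subseteq> V" "disjnt U V" by blast
    moreover have "y \<in> topspace X - O'" using y nb_mem[OF y] unfolding O'_def by blast
    ultimately have "z \<in> V" using nb_sub[of X V y] z by blast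
    then show False using \<open>z \<in> U\<close> \<open>disjnt U V\<close> by (auto simp: disjnt_def)
  qed
qed

lemma symm_reg:
  assumes P: "principal_space X" and S: "symm X"
  shows "regular_space X"
  unfolding regular_space_def
proof (intro allI impI)
  fix C a assume h: "closedin X C \<and> a \<in> topspace X - C"
  have o: "openin X (topspace X - C)" using h by (simp add: closedin_def)
  have c: "closedin X (topspace X - C)" using symm_closed[OF P S o] .
  have "openin X C"
  proof -
    have "C = topspace X - (topspace X - C)" using h closedin_subset by blast
    then show ?thesis using c by (metis openin_diff openin_topspace)
  qed
  then show "\<exists>U V. openin X U \<and> openin X V \<and> a \<in> U \<and> C \<subseteq> V \<and> disjnt U V"
    using o h by (auto simp: disjnt_def)
qed

lemma clopen_symm:
  assumes P: "principal_space X" and B: "clopen_basis X"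
  shows "symm X"
  unfolding symm_def
proof (intro ballI allI impI)
  fix y z assume y: "y \<in> topspace X" and z: "z \<in> nb X y"
  have zt: "z \<in> topspace X" using subsetD[OF nb_top z] .
  obtain \<B> where b1: "\<forall>B\<in>\<B>. openin X B \<and> closedin X B"
    and b2: "\<forall>U. openin X U \<longrightarrow> (\<exists>\<U>. \<U> \<subseteq> \<B> \<and> U = \<Union>\<U>)"
    using B unfolding clopen_basis_def by blast
  obtain \<U> where "\<U> \<subseteq> \<B>" "nb X z = \<Union>\<U>" using b2 nb_open[OF P, of z] by blast
  then obtain Bz where Bz: "Bz \<in> \<B>" "z \<in> Bz" "Bz \<subseteq> nb X z"
    using nb_mem[OF zt] by blast
  show "y \<in> nb X z"
  proof (rule ccontr)
    assume "y \<notin> nb X z"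
    then have "y \<in> topspace X - Bz" using y Bz by blast
    moreover have "openin X (topspace X - Bz)" using b1 Bz by blast
    ultimately have "nb X y \<subseteq> topspace X - Bz" using nb_sub[of X "topspace X - Bz" y] by blast
    then show False using z Bz by blast
  qed
qed

lemma symm_clopen:
  assumes P: "principal_space X" and S: "symm X"
  shows "clopen_basis X"
proof -
  have 1: "\<forall>B\<in>{U. openin X U}. openin X B \<and> closedin X B"
    using symm_closed[OF P S] by blast
  have 2: "\<forall>U. openin X U \<longrightarrow> (\<exists>\<U>. \<U> \<subseteq> {U. openin X U} \<and> U = \<Union>\<U>)"
  proof (intro allI impI)
    fix U assume "openin X U"
    then have "{U} \<subseteq> {U. openin X U} \<and> U = \<Union>{U}" by simp
    then show "\<exists>\<U>. \<U> \<subseteq> {U. openin X U} \<and> U = \<Union>\<U>" by blast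
  qed
  show ?thesis unfolding clopen_basis_def using 1 2 by blast
qed

lemma neg_open: "openin X U \<Longrightarrow> closedin X U \<Longrightarrow> open_neg X U = topspace X - U"
  unfolding open_neg_def by (simp add: closedin_def interior_of_openin)

lemma symm_neg:
  assumes P: "principal_space X" and S: "symm X" and U: "openin X U"
  shows "open_neg X (open_neg X U) = U"
proof -
  have c: "closedin X U" using symm_closed[OF P S U] .
  have o: "openin X (topspace X - U)" using c by (simp add: closedin_def)
  have "closedin X (topspace X - U)" using symm_closed[OF P S o] .
  then show ?thesis using neg_open[OF U c] neg_open[OF o] U openin_subset
    by (metis Diff_Diff_Int inf.absorb_iff2)
qed

lemma neg_symm:
  assumes P: "principal_space X" and N: "\<forall>U. openin X U \<longrightarrow> open_neg X (open_neg X U) = U"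
  shows "symm X"
  unfolding symm_def
proof (intro ballI allI impI)
  fix y z assume y: "y \<in> topspace X" and z: "z \<in> nb X y"
  have zt: "z \<in> topspace X" using subsetD[OF nb_top z] .
  show "y \<in> nb X z"
  proof (rule ccontr)
    assume ny: "y \<notin> nb X z"
    define U where "U = nb X y \<inter> {p \<in> topspace X. y \<notin> nb X p}"
    have Uo: "openin X U"
    proof (subst openin_subopen, intro ballI)
      fix p assume p: "p \<in> U"
      have "nb X p \<subseteq> U"
      proof
        fix q assume q: "q \<in> nb X p"
        have "nb X q \<subseteq> nb X p" using nb_trans[OF P q] .
        moreover have "nb X p \<subseteq> nb X y" using p nb_trans[OF P, of p y] unfolding U_def by blast
        ultimately show "q \<in> U" using p q subsetD[OF nb_top q] unfolding U_def by blast
      qed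
      then show "\<exists>T. openin X T \<and> p \<in> T \<and> T \<subseteq> U"
        using nb_open[OF P, of p] nb_mem[of p X] p unfolding U_def by blast
    qed
    have yU: "y \<notin> U" using nb_mem[OF y] unfolding U_def by blast
    have zU: "z \<in> U" using z zt ny unfolding U_def by blast
    have sub: "nb X y \<subseteq> topspace X - X interior_of (topspace X - U)"
    proof
      fix p assume p: "p \<in> nb X y"
      have pt: "p \<in> topspace X" using subsetD[OF nb_top p] .
      show "p \<in> topspace X - X interior_of (topspace X - U)"
      proof (rule ccontr)
        assume "p \<notin> topspace X - X interior_of (topspace X - U)"
        then have pi: "p \<in> X interior_of (topspace X - U)" using pt by blast
        have nU: "nb X p \<subseteq> topspace X - U"
          using nb_sub[OF openin_interior_of pi] interior_of_subset[of X "topspace X - U"] by (rule order_trans)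
        show False
        proof (cases "y \<in> nb X p")
          case True
          then have "z \<in> nb X p" using nb_trans[OF P True] z by blast
          then show False using nU zU by blast
        next
          case False
          then have "p \<in> U" using p pt unfolding U_def by blast
          then show False using nU nb_mem[OF pt] by blast
        qed
      qed
    qed
    have "nb X y \<subseteq> open_neg X (open_neg X U)"
      unfolding open_neg_def by (rule interior_of_maximal[OF sub nb_open[OF P]])
    then have "y \<in> open_neg X (open_neg X U)" using nb_mem[OF y] by blast
    moreover have "open_neg X (open_neg X U) = U" using N Uo by blast
    ultimately show False using yU by simp
  qed
qed

theorem theorem2p1:
  fixes X :: "'a topology"
  assumes "principal_space X"
  shows "(pre_Hausdorff_space X \<longleftrightarrow> regular_space X)
       \<and> (regular_space X \<longleftrightarrow> clopen_basis X)
       \<and> (clopen_basis X \<longleftrightarrow> (\<forall>U. openin X U \<longrightarrow> open_neg X (open_neg X U) = U))"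
proof -
  have a: "pre_Hausdorff_space X \<longleftrightarrow> symm X" using preH_symm[OF assms] symm_preH[OF assms] by blast
  have b: "regular_space X \<longleftrightarrow> symm X" using reg_symm[OF assms] symm_reg[OF assms] by blast
  have c: "clopen_basis X \<longleftrightarrow> symm X" using clopen_symm[OF assms] symm_clopen[OF assms] by blast
  have d: "(\<forall>U. openin X U \<longrightarrow> open_neg X (open_neg X U) = U) \<longleftrightarrow> symm X"
    using symm_neg[OF assms] neg_symm[OF assms] by blast
  show ?thesis using a b c d by simp
qed

end
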